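(* Let $f\in C([0,1])$. Then $f\in\mathcal{F}_0$ if and only if there exist real numbers $\alpha_h$, $h\in\mathbf{Z}$, such that $$f(t)=\alpha_0t+\lim_{N\to+\infty}\sum_{1\le|h|\le N}\alpha_h\frac{e(ht)-1}{2i\pi h}\Bigl(1-\frac{|h|}{N}\Bigr)$$ uniformly for $t\in[0,1]$. For $f\in\mathcal{F}_0$, this expansion holds if and only if $\alpha_0=f(1)$ and $\alpha_h=f(1)+2i\pi h\widehat f(h)$ for $h\neq0$, where $\widehat f(h)=\int_0^1f(t)e(-ht)\,dt$. Moreover, for $f\in\mathcal{F}_0$ with these coefficients, $f\in\mathcal{S}$ if and only if $|\alpha_h|\le2$ for all $h\in\mathbf{Z}$.
   Context: $e(z)=e^{2i\pi z}$. $C([0,1])$ is the space of continuous complex-valued functions on $[0,1]$ with the sup norm. $\mathcal{F}_0$ is the real vector space of all $f\in C([0,1])$ such that $f(t)+\overline{f(1-t)}=f(1)$ for all $t\in[0,1]$. $\mathcal{S}$ is the support in $C([0,1])$ of the law of the random series $\mathrm{K}(t)=t\,\mathrm{ST}_0+\sum_{h\neq0}\frac{e(ht)-1}{2\pi i h}\mathrm{ST}_h$, where $(\mathrm{ST}_h)_{h\in\mathbf{Z}}$ are independent with Sato–Tate law $\frac1\pi\sqrt{1-x^2/4}\,dx$ on $[-2,2]$ (almost surely uniformly convergent via symmetric partial sums); equivalently, $\mathcal{S}$ is the set of $f\in C([0,1])$ with $f(0)=0$, $f(1)\in[-2,2]$, and such that $g(t)=f(t)-tf(1)$ has $\widehat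 g(h)\in i\mathbf{R}$ and $|\widehat g(h)|\le1/(\pi|h|)$ for all $h\ne0$. *)

theory Defs
  imports "HOL-Analysis.Analysis"
begin

definition e :: "complex \<Rightarrow> complex" where
  "e z = exp (2 * of_real pi * \<i> * z)"

definition fourier_coeff :: "(real \<Rightarrow> complex) \<Rightarrow> int \<Rightarrow> complex" where
  "fourier_coeff f h = integral {0..1} (\<lambda>t. f t * e (- (of_int h * of_real t)))"

definition F0 :: "(real \<Rightarrow> complex) set" where
  "F0 = {f. continuous_on {0..1} f \<and>
            (\<forall>t\<in>{0..1}. f t + cnj (f (1 - t)) = f 1)}"

text \<open>The support S, via the equivalent description given in the context.\<close>
definition S :: "(real \<Rightarrow> complex) set" where
  "S = {f. continuous_on {0..1} f \<and> f 0 = 0 \<and> f 1 \<in> complex_of_real ` {-2..2} \<and>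
           (let g = (\<lambda>t. f t - of_real t * f 1) in
            \<forall>h::int. h \<noteq> 0 \<longrightarrow>
              Re (fourier_coeff g h) = 0 \<and>
              norm (fourier_coeff g h) \<le> 1 / (pi * \<bar>of_int h\<bar>))}"

definition fejer_partial :: "(int \<Rightarrow> real) \<Rightarrow> nat \<Rightarrow> real \<Rightarrow> complex" where
  "fejer_partial \<alpha> N t =
     of_real (\<alpha> 0) * of_real t +
     (\<Sum>h\<in>{-int N..int N} - {0}.
        of_real (\<alpha> h) * (e (of_int h * of_real t) - 1) / (2 * \<i> * of_real pi * of_int h)
        * of_real (1 - of_int \<bar>h\<bar> / real N))"

definition has_expansion :: "(int \<Rightarrow> real) \<Rightarrow> (real \<Rightarrow> complex) \<Rightarrow> bool" where
  "has_expansion \<alpha> f \<longleftrightarrow> uniform_limit {0..1} (fejer_partial \<alpha>) f sequentially"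

definition expansion_coeffs :: "(real \<Rightarrow> complex) \<Rightarrow> (int \<Rightarrow> real) \<Rightarrow> bool" where
  "expansion_coeffs f \<alpha> \<longleftrightarrow> complex_of_real (\<alpha> 0) = f 1 \<and>
     (\<forall>h::int. h \<noteq> 0 \<longrightarrow>
        complex_of_real (\<alpha> h) = f 1 + 2 * \<i> * of_real pi * of_int h * fourier_coeff f h)"

end

theory Submission
  imports Defs
begin

lemma e_add: "e (a + b) = e a * e b"
  unfolding e_def by (simp add: distrib_left exp_add)

lemma e_int: "e (of_int h) = 1"
proof -
  have "e (of_int h) = exp (\<i> * (of_int h * (of_real pi * 2)))" unfolding e_def
    by (simp add: ac_simps)
  then show ?thesis by simp
qed

lemma e_minus: "e (- z) = inverse (e z)"
  unfolding e_def by (simp add: exp_minus)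

lemma e_zero[simp]: "e 0 = 1" unfolding e_def by simp

lemma cnj_e_real: "cnj (e (of_real x)) = e (- of_real x)"
  unfolding e_def by (simp add: exp_cnj)

lemma norm_e_real[simp]: "norm (e (of_real x)) = 1"
  unfolding e_def by simp

lemma e_nat_mult: "e (of_nat k * z) = e z ^ k"
  unfolding e_def by (simp add: exp_of_nat_mult[symmetric] ac_simps)

lemma e_real_cis: "e (of_real x) = cis (2 * pi * x)"
  unfolding e_def by (simp add: cis_conv_exp ac_simps)

lemma norm_e_minus_1_sq: "(norm (e (of_real x) - 1))^2 = 2 - 2 * cos (2 * pi * x)"
proof -
  have "(norm (e (of_real x) - 1))^2 = (cos (2*pi*x) - 1)^2 + (sin (2*pi*x))^2"
    unfolding e_real_cis by (simp add: cmod_power2)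
  also have "... = 2 - 2 * cos (2 * pi * x)"
    by (simp add: power2_eq_square algebra_simps)
  finally show ?thesis .
qed

lemma ftc_complex:
  fixes F f :: "complex \<Rightarrow> complex"
  assumes "\<And>z. (F has_field_derivative f z) (at z)"
  shows "((\<lambda>t. f (of_real t)) has_integral (F 1 - F 0)) {0..1}"
proof -
  have "((\<lambda>t. f (of_real t)) has_integral ((\<lambda>t. F (of_real t)) 1 - (\<lambda>t. F (of_real t)) 0)) {0..1}"
    by (rule fundamental_theorem_of_calculus)
       (auto intro!: has_vector_derivative_real_field assms)
  then show ?thesis by simp
qed

lemma e_exp: "e (of_int m * z) = exp (z * (2 * of_real pi * \<i> * of_int m))"
  unfolding e_def by (simp add: ac_simps)

lemma int_e:
  "((\<lambda>t. e (of_int m * of_real t)) has_integral (if m = 0 then 1 else 0)) {0..1}"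
proof (cases "m = 0")
  case True
  then show ?thesis using has_integral_const_real[of "1::complex" 0 1] by simp
next
  case False
  define c where "c = 2 * of_real pi * \<i> * (of_int m :: complex)"
  have c0: "c \<noteq> 0" using False by (simp add: c_def)
  have "((\<lambda>t. exp (of_real t * c)) has_integral (exp (1 * c) / c - exp (0 * c) / c)) {0..1}"
    by (rule ftc_complex) (auto intro!: derivative_eq_intros simp: c0)
  moreover have "exp c = 1" using e_int[of m] unfolding e_def c_def by (simp add: ac_simps)
  ultimately show ?thesis using False by (simp add: e_exp c_def)
qed

lemma int_t_e:
  assumes "m \<noteq> 0"
  shows "((\<lambda>t. of_real t * e (of_int m * of_real t)) has_integral (1 / (2 * of_real pi * \<i> * of_int m))) {0..1}"
proof -
  define c where "c = 2 * of_real pi * \<i> * (of_int m :: complex)"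
  have c0: "c \<noteq> 0" using assms by (simp add: c_def)
  have "((\<lambda>t. of_real t * exp (of_real t * c)) has_integral
      ((1 * exp (1 * c) / c - exp (1 * c) / c^2) - (0 * exp (0 * c) / c - exp (0 * c) / c^2))) {0..1}"
    by (rule ftc_complex) (auto intro!: derivative_eq_intros simp: c0 field_simps power2_eq_square)
  moreover have "exp c = 1" using e_int[of m] unfolding e_def c_def by (simp add: ac_simps)
  ultimately show ?thesis by (simp add: e_exp c_def)
qed

lemma sum_pos_part:
  fixes F :: "int \<Rightarrow> 'a::comm_ring_1"
  shows "(\<Sum>k<N. F (int N - int k)) = (\<Sum>h\<in>{1..int N}. F h)"
  by (rule sum.reindex_bij_witness[where i="\<lambda>h. nat (int N - h)" and j="\<lambda>k. int N - int k"]) auto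

lemma sum_neg_part:
  fixes F :: "int \<Rightarrow> 'a::comm_ring_1"
  shows "(\<Sum>j<N. F (int j - int N)) = (\<Sum>h\<in>{-int N..-1}. F h)"
  by (rule sum.reindex_bij_witness[where i="\<lambda>h. nat (int N + h)" and j="\<lambda>k. int k - int N"]) auto

lemma sum_sym_split:
  fixes F :: "int \<Rightarrow> 'a::comm_ring_1"
  shows "(\<Sum>h\<in>{-int N..int N}. F h) = F 0 + (\<Sum>k<N. F (int N - int k)) + (\<Sum>j<N. F (int j - int N))"
proof -
  have "{-int N..int N} = {-int N..-1} \<union> ({0} \<union> {1..int N})" by auto
  then have "(\<Sum>h\<in>{-int N..int N}. F h) = (\<Sum>h\<in>{-int N..-1}. F h) + (F 0 + (\<Sum>h\<in>{1..int N}. F h))"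
    by (simp add: sum.union_disjoint)
  then show ?thesis by (simp add: sum_pos_part sum_neg_part ac_simps)
qed

lemma double_sum_diff:
  fixes F :: "int \<Rightarrow> 'a::comm_ring_1"
  shows "(\<Sum>j<N. \<Sum>k<N. F (int j - int k)) = (\<Sum>h\<in>{-int N..int N}. of_int (int N - \<bar>h\<bar>) * F h)"
proof (induction N)
  case 0
  then show ?case by simp
next
  case (Suc N)
  have L: "(\<Sum>j<Suc N. \<Sum>k<Suc N. F (int j - int k)) =
      (\<Sum>j<N. \<Sum>k<N. F (int j - int k)) + ((\<Sum>k<N. F (int N - int k)) + (\<Sum>j<N. F (int j - int N)) + F 0)"
    by (simp add: sum.distrib algebra_simps)
  have "{-int (Suc N)..int (Suc N)} = insert (-int (Suc N)) (insert (int (Suc N)) {-int N..int N})" by auto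
  then have "(\<Sum>h\<in>{-int (Suc N)..int (Suc N)}. of_int (int (Suc N) - \<bar>h\<bar>) * F h) =
     (\<Sum>h\<in>{-int N..int N}. of_int (int (Suc N) - \<bar>h\<bar>) * F h)"
    by simp
  also have "... = (\<Sum>h\<in>{-int N..int N}. of_int (int N - \<bar>h\<bar>) * F h) + (\<Sum>h\<in>{-int N..int N}. F h)"
    by (simp add: sum.distrib[symmetric] algebra_simps)
  finally have R: "(\<Sum>h\<in>{-int (Suc N)..int (Suc N)}. of_int (int (Suc N) - \<bar>h\<bar>) * F h) =
     (\<Sum>h\<in>{-int N..int N}. of_int (int N - \<bar>h\<bar>) * F h) + (\<Sum>h\<in>{-int N..int N}. F h)" .
  show ?case unfolding L R Suc.IH sum_sym_split[of F N] by (simp only: add_ac)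
qed

definition w :: "nat \<Rightarrow> int \<Rightarrow> real" where
  "w N h = 1 - of_int \<bar>h\<bar> / real N"

definition Kc :: "nat \<Rightarrow> real \<Rightarrow> complex" where
  "Kc N x = (\<Sum>h\<in>{-int N..int N}. of_real (w N h) * e (of_int h * of_real x))"

definition Kr :: "nat \<Rightarrow> real \<Rightarrow> real" where
  "Kr N x = (norm (\<Sum>k<N. e (of_real x) ^ k))^2 / real N"

lemma cont_e [continuous_intros]:
  "continuous_on A f \<Longrightarrow> continuous_on A (\<lambda>x. e (f x))"
  unfolding e_def by (intro continuous_intros)

lemma Kr_nonneg: "Kr N x \<ge> 0" by (simp add: Kr_def)

lemma cont_Kr: "continuous_on A (\<lambda>x. Kr N (f x))" if "continuous_on A f"
  unfolding Kr_def divide_inverse by (intro continuous_intros that)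

lemma ofr_div: "of_real (a / real N) = (of_real a / of_nat N :: complex)" by simp

lemma Kc_eq: assumes "N > 0" shows "Kc N x = of_real (Kr N x)"
proof -
  define z where "z = e (of_real x)"
  define F where "F h = e (of_int h * of_real x)" for h :: int
  have prod: "z ^ j * cnj z ^ k = F (int j - int k)" for j k
  proof -
    have a: "e (of_nat j * of_real x) = z ^ j" by (simp only: e_nat_mult z_def)
    have b: "e (of_nat k * (- of_real x)) = cnj z ^ k" by (simp only: e_nat_mult cnj_e_real z_def)
    have "z ^ j * cnj z ^ k = e (of_nat j * of_real x) * e (of_nat k * (- of_real x))"
      by (simp only: a b)
    also have "... = F (int j - int k)" unfolding F_def e_add[symmetric]
      by (simp add: algebra_simps)
    finally show ?thesis .
  qed
  have "of_real ((norm (\<Sum>k<N. z ^ k))^2) = (\<Sum>k<N. z ^ k) * cnj (\<Sum>k<N. z ^ k)"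
    by (rule complex_norm_square)
  also have "... = (\<Sum>j<N. \<Sum>k<N. z ^ j * cnj z ^ k)"
    by (simp only: cnj_sum sum_product complex_cnj_power)
  also have "... = (\<Sum>j<N. \<Sum>k<N. F (int j - int k))" by (simp add: prod)
  also have "... = (\<Sum>h\<in>{-int N..int N}. of_int (int N - \<bar>h\<bar>) * F h)"
    by (rule double_sum_diff)
  finally have *: "of_real ((norm (\<Sum>k<N. z ^ k))^2) = (\<Sum>h\<in>{-int N..int N}. of_int (int N - \<bar>h\<bar>) * F h)" .
  have wh: "of_real (w N h) * F h = of_int (int N - \<bar>h\<bar>) * F h / of_nat N" for h
  proof -
    have "w N h = real_of_int (int N - \<bar>h\<bar>) / real N" using assms by (simp add: w_def field_simps)
    then have "(of_real (w N h) :: complex) = of_real (real_of_int (int N - \<bar>h\<bar>)) / of_real (real N)" by simp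
    then have "(of_real (w N h) :: complex) = of_int (int N - \<bar>h\<bar>) / of_nat N" by (simp only: of_real_of_int_eq of_real_of_nat_eq)
    then show ?thesis by simp
  qed
  have "Kc N x = (\<Sum>h\<in>{-int N..int N}. of_int (int N - \<bar>h\<bar>) * F h / of_nat N)"
    unfolding Kc_def F_def[symmetric] wh ..
  also have "... = of_real ((norm (\<Sum>k<N. z ^ k))^2) / of_nat N"
    unfolding * by (simp only: sum_divide_distrib)
  also have "... = of_real ((norm (\<Sum>k<N. z ^ k))^2 / real N)" by (rule ofr_div[symmetric])
  also have "... = of_real (Kr N x)" by (simp only: Kr_def z_def)
  finally show ?thesis .
qed

lemma cos_bound:
  assumes "0 < d" "d \<le> 1/2" "d \<le> \<bar>x\<bar>" "\<bar>x\<bar> \<le> 1 - d"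
  shows "cos (2 * pi * x) \<le> cos (2 * pi * d)"
proof -
  have c: "cos (2 * pi * x) = cos (2 * pi * \<bar>x\<bar>)"
    by (cases "x \<ge> 0") auto
  show ?thesis
  proof (cases "\<bar>x\<bar> \<le> 1/2")
    case True
    then show ?thesis unfolding c by (intro cos_monotone_0_pi_le) (use assms in auto)
  next
    case False
    have "cos (2 * pi * \<bar>x\<bar>) = cos (2 * pi * (1 - \<bar>x\<bar>))"
    proof -
      have "cos (2 * pi * (1 - \<bar>x\<bar>)) = cos (2 * pi - 2 * pi * \<bar>x\<bar>)" by (simp add: algebra_simps)
      also have "... = cos (2 * pi * \<bar>x\<bar>)" by (simp add: cos_diff)
      finally show ?thesis by simp
    qed
    then show ?thesis unfolding c using False assms by (auto intro!: cos_monotone_0_pi_le)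
  qed
qed

lemma cos_lt1: assumes "0 < d" "d \<le> 1/2" shows "cos (2 * pi * d) < 1"
  using cos_monotone_0_pi[of 0 "2*pi*d"] assms by auto

lemma Kr_tail:
  assumes "0 < d" "d \<le> 1/2" "d \<le> \<bar>x\<bar>" "\<bar>x\<bar> \<le> 1 - d" "N > 0"
  shows "Kr N x \<le> 4 / (real N * (2 - 2 * cos (2 * pi * d)))"
proof -
  define z where "z = e (of_real x)"
  have pos: "2 - 2 * cos (2 * pi * d) > 0" using cos_lt1[OF assms(1,2)] by simp
  have le: "2 - 2 * cos (2 * pi * d) \<le> (norm (z - 1))^2"
    using cos_bound[OF assms(1-4)] by (simp add: z_def norm_e_minus_1_sq)
  then have z1: "z \<noteq> 1" using pos by auto
  have zpos: "(norm (z - 1))^2 > 0" using z1 by simp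
  have nz: "norm z = 1" by (simp add: z_def)
  have "(\<Sum>k<N. z ^ k) = (1 - z ^ N) / (1 - z)" using z1 by (simp add: sum_gp_strict)
  then have "norm (\<Sum>k<N. z ^ k) = norm (1 - z ^ N) / norm (z - 1)"
    by (simp add: norm_divide norm_minus_commute)
  also have "... \<le> 2 / norm (z - 1)"
  proof -
    have "norm (1 - z ^ N) \<le> norm (1::complex) + norm (z ^ N)" by (rule norm_triangle_ineq4)
    then have "norm (1 - z ^ N) \<le> 2" by (simp add: norm_power nz)
    then show ?thesis using z1 by (simp add: divide_right_mono)
  qed
  finally have n1: "norm (\<Sum>k<N. z ^ k) \<le> 2 / norm (z - 1)" .
  have "(norm (\<Sum>k<N. z ^ k))^2 \<le> (2 / norm (z - 1))^2"
    by (rule power_mono[OF n1]) simp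
  also have "... = 4 / (norm (z - 1))^2" by (simp add: power_divide)
  also have "... \<le> 4 / (2 - 2 * cos (2 * pi * d))"
    by (rule divide_left_mono[OF le]) (use pos zpos in auto)
  finally have "(norm (\<Sum>k<N. z ^ k))^2 \<le> 4 / (2 - 2 * cos (2 * pi * d))" .
  then have "(norm (\<Sum>k<N. z ^ k))^2 / real N \<le> (4 / (2 - 2 * cos (2 * pi * d))) / real N"
    by (rule divide_right_mono) simp
  then show ?thesis unfolding Kr_def z_def[symmetric] by (simp add: mult.commute)
qed

definition sigma :: "(real \<Rightarrow> complex) \<Rightarrow> nat \<Rightarrow> real \<Rightarrow> complex" where
  "sigma g N t = (\<Sum>h\<in>{-int N..int N}. of_real (w N h) * fourier_coeff g h * e (of_int h * of_real t))"

lemma cont_Kc: "continuous_on A (\<lambda>x. Kc N (f x))" if "continuous_on A f"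
  unfolding Kc_def by (intro continuous_intros that)

lemma cont_e_lin [continuous_intros]: "continuous_on A (\<lambda>x::real. e (c * of_real x))"
  unfolding e_def by (intro continuous_intros)

lemma e_split: "e (of_int h * of_real (t - s)) = e (of_int h * of_real t) * e (of_int (-h) * of_real s)"
  by (simp add: e_add[symmetric] algebra_simps)

lemma e_neg: "e (- (of_int h * of_real s)) = e (of_int (-h) * of_real s)"
  by simp

lemma sigma_conv:
  assumes g: "continuous_on {0..1} g"
  shows "sigma g N t = integral {0..1} (\<lambda>s. g s * Kc N (t - s))"
proof -
  have int: "(\<lambda>s. g s * e (of_int (-h) * of_real s)) integrable_on {0..1}" for h
    by (intro integrable_continuous_interval continuous_intros g)
  have "integral {0..1} (\<lambda>s. g s * Kc N (t - s)) =
     integral {0..1} (\<lambda>s. \<Sum>h\<in>{-int N..int N}. of_real (w N h) * e (of_int h * of_real t) * (g s * e (of_int (-h) * of_real s)))"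
    unfolding Kc_def e_split by (simp add: sum_distrib_left ac_simps)
  also have "... = (\<Sum>h\<in>{-int N..int N}. integral {0..1} (\<lambda>s. of_real (w N h) * e (of_int h * of_real t) * (g s * e (of_int (-h) * of_real s))))"
    by (rule integral_sum) (auto intro!: integrable_continuous_interval continuous_intros g)
  also have "... = sigma g N t"
    unfolding sigma_def fourier_coeff_def e_neg
    by (rule sum.cong[OF refl]) (simp only: integral_mult_right, simp add: ac_simps)
  finally show ?thesis ..
qed

lemma Kc_int: assumes "N > 0" shows "(( \<lambda>s. Kc N (t - s)) has_integral 1) {0..1}"
proof -
  have "((\<lambda>s. \<Sum>h\<in>{-int N..int N}. of_real (w N h) * e (of_int h * of_real t) * e (of_int (-h) * of_real s))
       has_integral (\<Sum>h\<in>{-int N..int N}. of_real (w N h) * e (of_int h * of_real t) * (if -h = 0 then 1 else 0))) {0..1}"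
    by (intro has_integral_sum finite_atLeastAtMost_int has_integral_mult_right int_e)
  moreover have "(\<Sum>h\<in>{-int N..int N}. of_real (w N h) * e (of_int h * of_real t) * (if -h = 0 then 1 else 0)) = (1::complex)"
    by (simp add: w_def if_distrib cong: if_cong) 
  ultimately show ?thesis unfolding Kc_def e_split by (simp add: ac_simps)
qed

lemma Kr_int: assumes "N > 0" shows "integral {0..1} (\<lambda>s. Kr N (t - s)) = 1"
proof -
  have "(\<lambda>s. Kr N (t - s)) integrable_on {0..1}"
    by (intro integrable_continuous_interval cont_Kr continuous_intros)
  then have "((\<lambda>s. of_real (Kr N (t - s)) :: complex) has_integral of_real (integral {0..1} (\<lambda>s. Kr N (t - s)))) {0..1}"
    by (intro has_integral_of_real integrable_integral)
  moreover have "((\<lambda>s. of_real (Kr N (t - s)) :: complex) has_integral 1) {0..1}"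
    using Kc_int[OF assms, of t] by (simp add: Kc_eq[OF assms])
  ultimately have "(of_real (integral {0..1} (\<lambda>s. Kr N (t - s))) :: complex) = 1"
    using has_integral_unique by blast
  then show ?thesis by simp
qed

lemma near_lemma:
  fixes g :: "real \<Rightarrow> complex"
  assumes g: "continuous_on {0..1} g" and g01: "g 0 = g 1" and ep: "\<epsilon> > 0"
  obtains \<delta> where "0 < \<delta>" "\<delta> \<le> 1/2"
    "\<And>s t. s \<in> {0..1} \<Longrightarrow> t \<in> {0..1} \<Longrightarrow> (\<bar>t - s\<bar> < \<delta> \<or> \<bar>t - s\<bar> > 1 - \<delta>) \<Longrightarrow> norm (g s - g t) < \<epsilon>"
proof -
  have "uniformly_continuous_on {0..1} g" by (rule compact_uniformly_continuous[OF g compact_Icc])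
  then obtain d where d: "d > 0" "\<And>x x'. x \<in> {0..1} \<Longrightarrow> x' \<in> {0..1} \<Longrightarrow> dist x' x < d \<Longrightarrow> dist (g x') (g x) < \<epsilon>/2"
    unfolding uniformly_continuous_on_def using ep by (metis half_gt_zero)
  define \<delta> where "\<delta> = min d (1/2)"
  show ?thesis
  proof (rule that)
    show "0 < \<delta>" "\<delta> \<le> 1/2" using d by (auto simp: \<delta>_def)
    fix s t assume s: "s \<in> {0..1}" and t: "t \<in> {0..1}" and st: "\<bar>t - s\<bar> < \<delta> \<or> \<bar>t - s\<bar> > 1 - \<delta>"
    show "norm (g s - g t) < \<epsilon>"
    proof (cases "\<bar>t - s\<bar> < \<delta>")
      case True
      then have "dist s t < d" by (simp add: dist_real_def \<delta>_def abs_minus_commute)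
      then have "dist (g s) (g t) < \<epsilon>/2" using d(2)[OF t s] by simp
      then show ?thesis using ep by (simp add: dist_norm)
    next
      case False
      then have far: "\<bar>t - s\<bar> > 1 - \<delta>" using st by auto
      have "\<delta> \<le> d" by (simp add: \<delta>_def)
      show ?thesis
      proof (cases "s \<le> t")
        case True
        then have "dist t 1 < d" "dist s 0 < d" using far s t \<open>\<delta> \<le> d\<close> by (auto simp: dist_real_def)
        then have a: "dist (g t) (g 1) < \<epsilon>/2" "dist (g s) (g 0) < \<epsilon>/2"
          using d(2)[of 1 t] d(2)[of 0 s] s t by auto
        have "norm (g s - g t) \<le> norm (g s - g 0) + norm (g 1 - g t)"
          using norm_triangle_ineq[of "g s - g 0" "g 1 - g t"] g01 by simp
        also have "... < \<epsilon>" using a by (simp add: dist_norm norm_minus_commute)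
        finally show ?thesis .
      next
        case False
        then have "dist s 1 < d" "dist t 0 < d" using far s t \<open>\<delta> \<le> d\<close> by (auto simp: dist_real_def)
        then have a: "dist (g s) (g 1) < \<epsilon>/2" "dist (g t) (g 0) < \<epsilon>/2"
          using d(2)[of 1 s] d(2)[of 0 t] s t by auto
        have "norm (g s - g t) \<le> norm (g s - g 1) + norm (g 0 - g t)"
          using norm_triangle_ineq[of "g s - g 1" "g 0 - g t"] g01 by simp
        also have "... < \<epsilon>" using a by (simp add: dist_norm norm_minus_commute)
        finally show ?thesis .
      qed
    qed
  qed
qed

lemma fejer:
  fixes g :: "real \<Rightarrow> complex"
  assumes g: "continuous_on {0..1} g" and g01: "g 0 = g 1"
  shows "uniform_limit {0..1} (sigma g) g sequentially"
proof (rule uniform_limitI)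
  fix \<epsilon> :: real assume ep: "0 < \<epsilon>"
  have "bounded (g ` {0..1})" by (intro compact_imp_bounded compact_continuous_image g compact_Icc)
  then obtain M where M: "M > 0" "\<And>s. s \<in> {0..1} \<Longrightarrow> norm (g s) \<le> M"
    unfolding bounded_pos by auto
  obtain \<delta> where dl: "0 < \<delta>" "\<delta> \<le> 1/2"
    and near: "\<And>s t. s \<in> {0..1} \<Longrightarrow> t \<in> {0..1} \<Longrightarrow> (\<bar>t - s\<bar> < \<delta> \<or> \<bar>t - s\<bar> > 1 - \<delta>) \<Longrightarrow> norm (g s - g t) < \<epsilon>/2"
    using near_lemma[OF g g01, of "\<epsilon>/2"] ep by auto
  define C where "C = 4 / (2 - 2 * cos (2 * pi * \<delta>))"
  have Cpos: "C > 0" using cos_lt1[OF dl] by (simp add: C_def)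
  have tail: "Kr N x \<le> C / real N" if "\<delta> \<le> \<bar>x\<bar>" "\<bar>x\<bar> \<le> 1 - \<delta>" "N > 0" for N x
    using Kr_tail[OF dl that] by (simp add: C_def mult.commute)
  define N0 where "N0 = nat \<lceil>4 * M * C / \<epsilon>\<rceil> + 1"
  have N0: "N0 > 0" "real N0 > 4 * M * C / \<epsilon>" unfolding N0_def by linarith+
  show "\<forall>\<^sub>F N in sequentially. \<forall>t\<in>{0..1}. dist (sigma g N t) (g t) < \<epsilon>"
    unfolding eventually_sequentially
  proof (intro exI allI impI ballI)
    fix N :: nat and t :: real assume NN: "N0 \<le> N" and t: "t \<in> {0..1}"
    have Npos: "N > 0" using NN N0 by simp
    have small: "2 * M * C / real N < \<epsilon> / 2"
    proof -
      have "4 * M * C < \<epsilon> * real N0" using N0(2) ep by (simp add: field_simps)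
      also have "... \<le> \<epsilon> * real N" using NN ep by simp
      finally show ?thesis using Npos by (simp add: field_simps)
    qed
    have i1: "(\<lambda>s. g s * Kc N (t - s)) integrable_on {0..1}"
      by (intro integrable_continuous_interval continuous_intros cont_Kc g)
    have i2: "(\<lambda>s. g t * Kc N (t - s)) integrable_on {0..1}"
      by (intro integrable_continuous_interval continuous_intros cont_Kc)
    have gt: "integral {0..1} (\<lambda>s. g t * Kc N (t - s)) = g t"
      using Kc_int[OF Npos, of t] by (simp add: integral_unique)
    have eq: "sigma g N t - g t = integral {0..1} (\<lambda>s. (g s - g t) * Kc N (t - s))"
    proof -
      have "integral {0..1} (\<lambda>s. (g s - g t) * Kc N (t - s)) = integral {0..1} (\<lambda>s. g s * Kc N (t - s) - g t * Kc N (t - s))"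
        by (simp only: left_diff_distrib)
      also have "... = integral {0..1} (\<lambda>s. g s * Kc N (t - s)) - integral {0..1} (\<lambda>s. g t * Kc N (t - s))"
        by (rule integral_diff[OF i1 i2])
      also have "... = sigma g N t - g t" by (simp only: gt sigma_conv[OF g])
      finally show ?thesis by simp
    qed
    have ir: "(\<lambda>s. \<epsilon>/2 * Kr N (t - s) + 2 * M * C / real N) integrable_on {0..1}"
      by (intro integrable_continuous_interval continuous_intros cont_Kr)
    have "norm (integral {0..1} (\<lambda>s. (g s - g t) * Kc N (t - s))) \<le>
        integral {0..1} (\<lambda>s. \<epsilon>/2 * Kr N (t - s) + 2 * M * C / real N)"
    proof (rule integral_norm_bound_integral)
      show "(\<lambda>s. (g s - g t) * Kc N (t - s)) integrable_on {0..1}"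
        by (intro integrable_continuous_interval continuous_intros cont_Kc g)
      show "(\<lambda>s. \<epsilon>/2 * Kr N (t - s) + 2 * M * C / real N) integrable_on {0..1}" by (rule ir)
      fix s :: real assume s: "s \<in> {0..1}"
      have K0: "Kr N (t - s) \<ge> 0" by (rule Kr_nonneg)
      have nrm: "norm ((g s - g t) * Kc N (t - s)) = norm (g s - g t) * Kr N (t - s)"
        using K0 by (simp add: Kc_eq[OF Npos] norm_mult)
      have c0: "0 \<le> 2 * M * C / real N" using M Cpos by simp
      show "norm ((g s - g t) * Kc N (t - s)) \<le> \<epsilon>/2 * Kr N (t - s) + 2 * M * C / real N"
      proof (cases "\<bar>t - s\<bar> < \<delta> \<or> \<bar>t - s\<bar> > 1 - \<delta>")
        case True
        then have "norm (g s - g t) \<le> \<epsilon>/2" using near[OF s t] by (meson less_imp_le)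
        then have "norm (g s - g t) * Kr N (t - s) \<le> \<epsilon>/2 * Kr N (t - s)"
          using K0 by (rule mult_right_mono)
        then show ?thesis using nrm c0 by linarith
      next
        case False
        then have "Kr N (t - s) \<le> C / real N" using tail[of "t - s" N] Npos by auto
        moreover have "norm (g s - g t) \<le> 2 * M"
          using norm_triangle_ineq4[of "g s" "g t"] M(2)[OF s] M(2)[OF t] by simp
        ultimately have "norm (g s - g t) * Kr N (t - s) \<le> (2 * M) * (C / real N)"
          using K0 M by (intro mult_mono) auto
        moreover have "0 \<le> \<epsilon>/2 * Kr N (t - s)" using K0 ep by simp
        ultimately show ?thesis using nrm by simp
      qed
    qed
    also have "... = \<epsilon>/2 * integral {0..1} (\<lambda>s. Kr N (t - s)) + 2 * M * C / real N"
    proof -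
      have ik: "(\<lambda>s. \<epsilon>/2 * Kr N (t - s)) integrable_on {0..1}"
        by (intro integrable_continuous_interval continuous_intros cont_Kr)
      have "integral {0..1} (\<lambda>s. \<epsilon>/2 * Kr N (t - s) + 2 * M * C / real N) =
          integral {0..1} (\<lambda>s. \<epsilon>/2 * Kr N (t - s)) + integral {0..1} (\<lambda>s::real. 2 * M * C / real N)"
        by (rule Henstock_Kurzweil_Integration.integral_add[OF ik integrable_const_ivl])
      also have "... = \<epsilon>/2 * integral {0..1} (\<lambda>s. Kr N (t - s)) + 2 * M * C / real N"
        by (simp only: integral_mult_right) simp
      finally show ?thesis .
    qed
    also have "... = \<epsilon>/2 + 2 * M * C / real N" using Kr_int[OF Npos] by simp
    also have "... < \<epsilon>" using small by simp
    finally show "dist (sigma g N t) (g t) < \<epsilon>" by (simp add: dist_norm eq)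
  qed
qed

definition Pc :: "complex \<Rightarrow> (int \<Rightarrow> complex) \<Rightarrow> nat \<Rightarrow> real \<Rightarrow> complex" where
 "Pc a0 a N t = a0 * of_real t + (\<Sum>h\<in>{-int N..int N}-{0}. a h * (e (of_int h * of_real t) - 1) / (2 * \<i> * of_real pi * of_int h) * of_real (1 - of_int \<bar>h\<bar> / real N))"

lemma fp_Pc: "fejer_partial \<alpha> = Pc (of_real (\<alpha> 0)) (\<lambda>h. of_real (\<alpha> h))"
  by (simp add: fejer_partial_def Pc_def fun_eq_iff)

lemma refl01:
  fixes \<phi> :: "real \<Rightarrow> 'a::banach"
  shows "integral {0..1} (\<lambda>t. \<phi> (1 - t)) = integral {0..1} \<phi>"
proof -
  have "integral {0..1} (\<lambda>t. \<phi> (1 - t)) = integral {-0..-(-1)} (\<lambda>x. (\<phi> \<circ> (+) 1) (-x))" by (simp add: o_def)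
  also have "... = integral {-1..0} (\<phi> \<circ> (+) 1)" by (rule Henstock_Kurzweil_Integration.integral_reflect_real)
  also have "... = integral {-1+1..0+1} \<phi>" by (rule integral_shift_Icc_real)
  finally show ?thesis by simp
qed

lemma int_E: "integral {0..1} (\<lambda>t. e (-(of_int h * of_real t))) = (if h = 0 then 1 else 0)"
  using int_e[of "-h"] by (simp add: integral_unique)

lemma int_t_E: assumes "h \<noteq> 0"
  shows "integral {0..1} (\<lambda>t. of_real t * e (-(of_int h * of_real t))) = - 1 / (2 * \<i> * of_real pi * of_int h)"
proof -
  have "integral {0..1} (\<lambda>t. of_real t * e (of_int (-h) * of_real t)) = 1 / (2 * of_real pi * \<i> * of_int (-h))"
    using int_t_e[of "-h"] assms by (simp add: integral_unique)
  then show ?thesis by (simp add: field_simps)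
qed

lemma F0_props:
  assumes "f \<in> F0"
  shows "continuous_on {0..1} f" "f 0 = 0" "cnj (f 1) = f 1"
    "\<And>t. t \<in> {0..1} \<Longrightarrow> f t = f 1 - cnj (f (1 - t))"
proof -
  have c: "\<And>t. t \<in> {0..1} \<Longrightarrow> f t + cnj (f (1 - t)) = f 1" and cont: "continuous_on {0..1} f"
    using assms by (auto simp: F0_def)
  show "continuous_on {0..1} f" by (rule cont)
  from c[of 1] have "cnj (f 0) = 0" by simp
  then show f0: "f 0 = 0" by simp
  from c[of 0] f0 show "cnj (f 1) = f 1" by simp
  show "\<And>t. t \<in> {0..1} \<Longrightarrow> f t = f 1 - cnj (f (1 - t))" using c by (metis add_diff_cancel_right')
qed

lemma cnj_E: "cnj (e (-(of_int h * of_real s))) = e (of_int h * of_real s)"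
  unfolding e_def by (simp add: exp_cnj)

lemma cont_comp_refl:
  fixes f :: "real \<Rightarrow> 'a::topological_space"
  assumes "continuous_on {0..1} f"
  shows "continuous_on {0..1} (\<lambda>t. f (1 - t))"
  by (rule continuous_on_compose2[OF assms]) (auto intro!: continuous_intros)

lemma fc_imag:
  assumes F: "f \<in> F0" and h: "h \<noteq> 0"
  shows "cnj (fourier_coeff f h) = - fourier_coeff f h"
proof -
  note P = F0_props[OF F]
  define E where "E t = e (-(of_int h * of_real t))" for t
  have contE: "continuous_on {0..1} E" unfolding E_def
    by (intro continuous_intros)
  have "fourier_coeff f h = integral {0..1} (\<lambda>t. (f 1 - cnj (f (1 - t))) * E t)"
    unfolding fourier_coeff_def E_def[symmetric]
  proof (rule integral_cong)
    fix t :: real assume t: "t \<in> {0..1}"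
    show "f t * E t = (f 1 - cnj (f (1 - t))) * E t" by (simp only: P(4)[OF t])
  qed
  also have "... = integral {0..1} (\<lambda>t. f 1 * E t - cnj (f (1 - t)) * E t)"
    by (simp only: left_diff_distrib)
  also have "... = integral {0..1} (\<lambda>t. f 1 * E t) - integral {0..1} (\<lambda>t. cnj (f (1 - t)) * E t)"
    by (rule integral_diff) (auto intro!: integrable_continuous_interval continuous_intros contE cont_comp_refl P(1))
  also have "integral {0..1} (\<lambda>t. f 1 * E t) = 0"
    using int_E[of h] h by (simp add: E_def)
  also have "integral {0..1} (\<lambda>t. cnj (f (1 - t)) * E t) = integral {0..1} (\<lambda>t. (\<lambda>s. cnj (f s) * E (1 - s)) (1 - t))"
    by simp
  also have "... = integral {0..1} (\<lambda>s. cnj (f s) * E (1 - s))" by (rule refl01)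
  also have "... = integral {0..1} (\<lambda>s. cnj (f s * E s))"
  proof (rule integral_cong)
    fix s :: real
    have "E (1 - s) = e (of_int h * of_real s) * e (- of_int h)"
      unfolding E_def e_add[symmetric] by (simp add: algebra_simps)
    also have "... = e (of_int h * of_real s)" using e_int[of "-h"] by simp
    finally show "cnj (f s) * E (1 - s) = cnj (f s * E s)" by (simp add: E_def cnj_E)
  qed
  also have "... = cnj (fourier_coeff f h)"
    unfolding fourier_coeff_def E_def integral_cnj ..
  finally have X: "fourier_coeff f h = 0 - cnj (fourier_coeff f h)" .
  have "cnj (fourier_coeff f h) = cnj (0 - cnj (fourier_coeff f h))" by (rule arg_cong[OF X])
  also have "... = - fourier_coeff f h" by simp
  finally show ?thesis .
qed

lemma real_of_cnj: assumes "cnj z = z" shows "complex_of_real (Re z) = z"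
proof -
  have "Im z = 0" using arg_cong[OF assms, of Im] by simp
  then show ?thesis by (simp add: complex_eq_iff)
qed

lemma fc_g:
  fixes f :: "real \<Rightarrow> complex"
  assumes f: "continuous_on {0..1} f" and h: "h \<noteq> 0"
  shows "fourier_coeff (\<lambda>t. f t - of_real t * c) h = fourier_coeff f h + c / (2 * \<i> * of_real pi * of_int h)"
proof -
  have "fourier_coeff (\<lambda>t. f t - of_real t * c) h =
      integral {0..1} (\<lambda>t. f t * e (-(of_int h * of_real t)) - c * (of_real t * e (-(of_int h * of_real t))))"
    unfolding fourier_coeff_def by (simp add: algebra_simps)
  also have "... = fourier_coeff f h - integral {0..1} (\<lambda>t. c * (of_real t * e (-(of_int h * of_real t))))"
    unfolding fourier_coeff_def
    by (rule integral_diff) (auto intro!: integrable_continuous_interval continuous_intros f)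
  also have "... = fourier_coeff f h + c / (2 * \<i> * of_real pi * of_int h)"
    using int_t_E[OF h] by simp
  finally show ?thesis .
qed

lemma expansion_limit:
  fixes f :: "real \<Rightarrow> complex"
  assumes f: "continuous_on {0..1} f" and f0: "f 0 = 0"
  shows "uniform_limit {0..1} (Pc (f 1) (\<lambda>h. f 1 + 2 * \<i> * of_real pi * of_int h * fourier_coeff f h)) f sequentially"
proof -
  define g where "g t = f t - of_real t * f 1" for t
  have gc: "continuous_on {0..1} g" unfolding g_def by (intro continuous_intros f)
  have g0: "g 0 = 0" "g 1 = 0" by (simp_all add: g_def f0)
  define c where "c h = f 1 + 2 * \<i> * of_real pi * of_int h * fourier_coeff f h" for h :: int
  have ghat: "fourier_coeff g h = c h / (2 * \<i> * of_real pi * of_int h)" if "h \<noteq> 0" for h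
  proof -
    have "fourier_coeff g h = fourier_coeff f h + f 1 / (2 * \<i> * of_real pi * of_int h)"
      unfolding g_def by (rule fc_g[OF f that])
    then show ?thesis using that by (simp add: c_def field_simps)
  qed
  have eq: "Pc (f 1) c N t = f 1 * of_real t + (sigma g N t - sigma g N 0)" for N t
  proof -
    define H where "H = {-int N..int N}"
    have "sigma g N t - sigma g N 0 = (\<Sum>h\<in>H. of_real (w N h) * fourier_coeff g h * (e (of_int h * of_real t) - 1))"
      unfolding sigma_def H_def[symmetric] by (simp add: sum_subtractf[symmetric] algebra_simps)
    also have "... = (\<Sum>h\<in>H - {0}. of_real (w N h) * fourier_coeff g h * (e (of_int h * of_real t) - 1))"
      by (rule sum.mono_neutral_right) (auto simp: H_def)
    also have "... = (\<Sum>h\<in>H - {0}. c h * (e (of_int h * of_real t) - 1) / (2 * \<i> * of_real pi * of_int h) * of_real (1 - of_int \<bar>h\<bar> / real N))"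
      by (rule sum.cong) (auto simp: ghat w_def)
    finally show ?thesis unfolding Pc_def H_def by simp
  qed
  show ?thesis
  proof (rule uniform_limitI)
    fix \<epsilon> :: real assume ep: "\<epsilon> > 0"
    have "\<forall>\<^sub>F N in sequentially. \<forall>t\<in>{0..1}. dist (sigma g N t) (g t) < \<epsilon>/2"
    proof -
      have g01: "g 0 = g 1" using g0 by simp
      show ?thesis using uniform_limitD[OF fejer[OF gc g01], of "\<epsilon>/2"] ep by simp
    qed
    then show "\<forall>\<^sub>F N in sequentially. \<forall>t\<in>{0..1}. dist (Pc (f 1) (\<lambda>h. f 1 + 2 * \<i> * of_real pi * of_int h * fourier_coeff f h) N t) (f t) < \<epsilon>"
    proof (rule eventually_mono)
      fix N assume A: "\<forall>t\<in>{0..1}. dist (sigma g N t) (g t) < \<epsilon>/2"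
      show "\<forall>t\<in>{0..1}. dist (Pc (f 1) (\<lambda>h. f 1 + 2 * \<i> * of_real pi * of_int h * fourier_coeff f h) N t) (f t) < \<epsilon>"
      proof
        fix t :: real assume t: "t \<in> {0..1}"
        have a: "norm (sigma g N t - g t) < \<epsilon>/2" using A t by (simp add: dist_norm)
        have b: "norm (sigma g N 0 - g 0) < \<epsilon>/2" using A by (simp add: dist_norm)
        have "Pc (f 1) (\<lambda>h. f 1 + 2 * \<i> * of_real pi * of_int h * fourier_coeff f h) N t - f t
            = (sigma g N t - g t) - (sigma g N 0 - g 0)"
          using eq[of N t] unfolding c_def[abs_def] by (simp add: g_def g0 f0 algebra_simps)
        then have "norm (Pc (f 1) (\<lambda>h. f 1 + 2 * \<i> * of_real pi * of_int h * fourier_coeff f h) N t - f t) < \<epsilon>"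
          using norm_triangle_ineq4[of "sigma g N t - g t" "sigma g N 0 - g 0"] a b by simp
        then show "dist (Pc (f 1) (\<lambda>h. f 1 + 2 * \<i> * of_real pi * of_int h * fourier_coeff f h) N t) (f t) < \<epsilon>"
          by (simp add: dist_norm)
      qed
    qed
  qed
qed

lemma cont_Pc: "continuous_on A (Pc a0 a N)"
  unfolding Pc_def by (intro continuous_intros) auto

lemma norm_e_it: "norm (e (of_int k * of_real t)) = 1"
proof -
  have "e (of_int k * of_real t) = e (of_real (of_int k * t))" by simp
  then show ?thesis by (simp only: norm_e_real)
qed

lemma norm_e_mit: "norm (e (-(of_int k * of_real t))) = 1"
  using norm_e_it[of "-k" t] by simp

lemma Pc_1: "Pc a0 a N 1 = a0"
  unfolding Pc_def using e_int by simp

lemma coeff_extract: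
  fixes f :: "real \<Rightarrow> complex" and a0 :: complex and a :: "int \<Rightarrow> complex"
  assumes f: "continuous_on {0..1} f" and U: "uniform_limit {0..1} (Pc a0 a) f sequentially"
  shows "f 1 = a0"
    and "k \<noteq> 0 \<Longrightarrow> fourier_coeff f k = (a k - a0) / (2 * \<i> * of_real pi * of_int k)"
proof -
  have "(\<lambda>N. Pc a0 a N 1) \<longlonglongrightarrow> f 1" by (rule tendsto_uniform_limitI[OF U]) simp
  then show "f 1 = a0" unfolding Pc_1 using LIMSEQ_unique[OF _ tendsto_const] by blast
next
  assume k: "k \<noteq> 0"
  define E where "E t = e (of_int (-k) * of_real t)" for t
  define D where "D h = 2 * \<i> * of_real pi * (of_int h :: complex)" for h
  have Dk: "D k \<noteq> 0" using k by (simp add: D_def)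
  have contE: "continuous_on A E" for A unfolding E_def by (intro continuous_intros)
  have fc: "fourier_coeff f k = integral {0..1} (\<lambda>t. f t * E t)"
    unfolding fourier_coeff_def E_def by simp
  define I where "I N = integral {0..1} (\<lambda>t. Pc a0 a N t * E t)" for N
  have I_lim: "I \<longlonglongrightarrow> fourier_coeff f k"
  proof (rule tendstoI)
    fix \<epsilon> :: real assume ep: "\<epsilon> > 0"
    show "\<forall>\<^sub>F N in sequentially. dist (I N) (fourier_coeff f k) < \<epsilon>"
    proof (rule eventually_mono[OF uniform_limitD[OF U, of "\<epsilon>/2"]])
      show "0 < \<epsilon>/2" using ep by simp
    next
      fix N assume A: "\<forall>t\<in>{0..1}. dist (Pc a0 a N t) (f t) < \<epsilon>/2"
      have "I N - fourier_coeff f k = integral {0..1} (\<lambda>t. Pc a0 a N t * E t - f t * E t)"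
        unfolding I_def fc
        by (rule integral_diff[symmetric]) (auto intro!: integrable_continuous_interval continuous_intros cont_Pc contE f)
      also have "norm ... \<le> integral {0..1} (\<lambda>t::real. \<epsilon>/2)"
      proof (rule integral_norm_bound_integral)
        show "(\<lambda>t. Pc a0 a N t * E t - f t * E t) integrable_on {0..1}"
          by (auto intro!: integrable_continuous_interval continuous_intros cont_Pc contE f)
        show "(\<lambda>t::real. \<epsilon>/2) integrable_on {0..1}" by (rule integrable_const_ivl)
        fix t :: real assume t: "t \<in> {0..1}"
        have "norm (Pc a0 a N t * E t - f t * E t) = norm (Pc a0 a N t - f t)"
          by (simp add: E_def left_diff_distrib[symmetric] norm_mult norm_e_mit)
        also have "... \<le> \<epsilon>/2" using A t by (force simp: dist_norm)
        finally show "norm (Pc a0 a N t * E t - f t * E t) \<le> \<epsilon>/2" .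
      qed
      also have "... = \<epsilon>/2" by simp
      also have "... < \<epsilon>" using ep by simp
      finally show "dist (I N) (fourier_coeff f k) < \<epsilon>" by (simp add: dist_norm)
    qed
  qed
  have I_val: "I N = a0 * (1 / (2 * of_real pi * \<i> * of_int (-k))) + a k / D k * of_real (1 - of_int \<bar>k\<bar> / real N)"
    if N: "nat \<bar>k\<bar> \<le> N" for N
  proof -
    define H where "H = {-int N..int N} - {0}"
    define b where "b h = a h / D h * of_real (1 - of_int \<bar>h\<bar> / real N)" for h
    have pw: "Pc a0 a N t * E t = a0 * (of_real t * E t) + (\<Sum>h\<in>H. b h * (e (of_int (h - k) * of_real t) - E t))" for t
    proof -
      have ee: "e (of_int h * of_real t) * E t = e (of_int (h - k) * of_real t)" for h
        unfolding E_def e_add[symmetric] by (simp add: algebra_simps)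
      have aux: "(x::complex) * (y - 1) / d * w * z = x / d * w * (y * z - z)" for x y d w z
        by (simp add: divide_inverse algebra_simps)
      have "Pc a0 a N t * E t = a0 * (of_real t * E t) + (\<Sum>h\<in>H. a h * (e (of_int h * of_real t) - 1) / D h * of_real (1 - of_int \<bar>h\<bar> / real N) * E t)"
        unfolding Pc_def H_def[symmetric] D_def by (simp add: distrib_right sum_distrib_right mult.assoc)
      also have "... = a0 * (of_real t * E t) + (\<Sum>h\<in>H. b h * (e (of_int (h - k) * of_real t) - E t))"
        unfolding aux b_def ee ..
      finally show ?thesis .
    qed
    have hi: "((\<lambda>t. a0 * (of_real t * E t) + (\<Sum>h\<in>H. b h * (e (of_int (h - k) * of_real t) - E t))) has_integral
        (a0 * (1 / (2 * of_real pi * \<i> * of_int (-k))) + (\<Sum>h\<in>H. b h * ((if h - k = 0 then 1 else 0) - (if -k = 0 then 1 else 0))))) {0..1}"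
      unfolding E_def
      by (intro has_integral_add has_integral_mult_right has_integral_sum has_integral_diff int_e int_t_e)
         (auto simp: H_def k)
    have "(\<Sum>h\<in>H. b h * ((if h - k = 0 then 1 else 0) - (if -k = 0 then 1 else 0))) = (\<Sum>h\<in>H. if h = k then b h else 0)"
      using k by (intro sum.cong) auto
    also have "... = b k" using k N by (simp add: H_def) linarith
    finally have "I N = a0 * (1 / (2 * of_real pi * \<i> * of_int (-k))) + b k"
      using hi unfolding I_def pw by (simp add: integral_unique)
    then show ?thesis by (simp add: b_def)
  qed
  have lim2: "(\<lambda>N. a0 * (1 / (2 * of_real pi * \<i> * of_int (-k))) + a k / D k * of_real (1 - of_int \<bar>k\<bar> / real N))
      \<longlonglongrightarrow> a0 * (1 / (2 * of_real pi * \<i> * of_int (-k))) + a k / D k * of_real (1 - 0)"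
    by (intro tendsto_intros)
  have "I \<longlonglongrightarrow> a0 * (1 / (2 * of_real pi * \<i> * of_int (-k))) + a k / D k * of_real (1 - 0)"
  proof (rule Lim_transform_eventually[OF lim2])
    show "\<forall>\<^sub>F N in sequentially. a0 * (1 / (2 * of_real pi * \<i> * of_int (-k))) + a k / D k * of_real (1 - of_int \<bar>k\<bar> / real N) = I N"
      unfolding eventually_sequentially using I_val by metis
  qed
  then have "fourier_coeff f k = a0 * (1 / (2 * of_real pi * \<i> * of_int (-k))) + a k / D k"
    using LIMSEQ_unique[OF I_lim] by simp
  then show "fourier_coeff f k = (a k - a0) / (2 * \<i> * of_real pi * of_int k)"
    using Dk unfolding D_def by (simp add: field_simps)
qed

lemma cnj_e_refl: "cnj (e (of_int h * of_real (1 - t))) = e (of_int h * of_real t)"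
proof -
  have "e (of_int h * of_real (1 - t)) = e (of_int h) * e (-(of_int h * of_real t))"
    unfolding e_add[symmetric] by (simp add: algebra_simps)
  then show ?thesis by (simp add: e_int cnj_E)
qed

lemma cnj_e_refl': "cnj (e (of_int h - of_int h * of_real t)) = e (of_int h * of_real t)"
  using cnj_e_refl[of h t] by (simp add: algebra_simps)

lemma Pc_sym:
  fixes \<alpha> :: "int \<Rightarrow> real"
  shows "Pc (of_real (\<alpha> 0)) (\<lambda>h. of_real (\<alpha> h)) N t + cnj (Pc (of_real (\<alpha> 0)) (\<lambda>h. of_real (\<alpha> h)) N (1 - t)) = of_real (\<alpha> 0)"
proof -
  define H where "H = {-int N..int N} - {0}"
  define W where "W h = (1 - of_int \<bar>h\<bar> / real N :: real)" for h
  have trm: "of_real (\<alpha> h) * (e (of_int h * of_real t) - 1) / (2 * \<i> * of_real pi * of_int h) * of_real (W h)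
     + cnj (of_real (\<alpha> h) * (e (of_int h * of_real (1 - t)) - 1) / (2 * \<i> * of_real pi * of_int h) * of_real (W h)) = 0" for h
    by (simp add: cnj_e_refl cnj_e_refl' field_simps)
  have "Pc (of_real (\<alpha> 0)) (\<lambda>h. of_real (\<alpha> h)) N t + cnj (Pc (of_real (\<alpha> 0)) (\<lambda>h. of_real (\<alpha> h)) N (1 - t))
     = (of_real (\<alpha> 0) * of_real t + cnj (of_real (\<alpha> 0) * of_real (1 - t))) +
       (\<Sum>h\<in>H. of_real (\<alpha> h) * (e (of_int h * of_real t) - 1) / (2 * \<i> * of_real pi * of_int h) * of_real (W h)
     + cnj (of_real (\<alpha> h) * (e (of_int h * of_real (1 - t)) - 1) / (2 * \<i> * of_real pi * of_int h) * of_real (W h)))"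
    unfolding Pc_def H_def[symmetric] W_def[symmetric] cnj_sum complex_cnj_add sum.distrib by (simp only: ac_simps)
  also have "... = of_real (\<alpha> 0)" unfolding trm by (simp add: algebra_simps)
  finally show ?thesis .
qed

lemma exp_to_F0:
  fixes f :: "real \<Rightarrow> complex"
  assumes f: "continuous_on {0..1} f" and E: "has_expansion \<alpha> f"
  shows "f \<in> F0"
proof -
  have U: "uniform_limit {0..1} (Pc (of_real (\<alpha> 0)) (\<lambda>h. of_real (\<alpha> h))) f sequentially"
    using E unfolding has_expansion_def fp_Pc .
  have "f t + cnj (f (1 - t)) = f 1" if t: "t \<in> {0..1}" for t
  proof -
    let ?P = "Pc (of_real (\<alpha> 0)) (\<lambda>h. of_real (\<alpha> h))"
    have "(\<lambda>N. ?P N t + cnj (?P N (1 - t))) \<longlonglongrightarrow> f t + cnj (f (1 - t))"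
      using t by (intro tendsto_intros tendsto_uniform_limitI[OF U]) auto
    moreover have "(\<lambda>N. ?P N t + cnj (?P N (1 - t))) \<longlonglongrightarrow> f 1"
      unfolding Pc_sym using tendsto_uniform_limitI[OF U, of 1] by (simp add: Pc_1)
    ultimately show ?thesis by (rule LIMSEQ_unique)
  qed
  then show ?thesis using f by (simp add: F0_def)
qed

lemma Pc_cong:
  assumes "a0 = b0" "\<And>h. h \<noteq> 0 \<Longrightarrow> a h = b h"
  shows "Pc a0 a = Pc b0 b"
  unfolding Pc_def fun_eq_iff using assms by (intro allI sum.cong arg_cong2[where f="(+)"]) auto

lemma coeffs_to_exp:
  fixes f :: "real \<Rightarrow> complex"
  assumes F: "f \<in> F0" and C: "expansion_coeffs f \<alpha>"
  shows "has_expansion \<alpha> f"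
proof -
  note P = F0_props[OF F]
  have "Pc (of_real (\<alpha> 0)) (\<lambda>h. of_real (\<alpha> h)) = Pc (f 1) (\<lambda>h. f 1 + 2 * \<i> * of_real pi * of_int h * fourier_coeff f h)"
    using C unfolding expansion_coeffs_def by (intro Pc_cong) auto
  then show ?thesis
    unfolding has_expansion_def fp_Pc using expansion_limit[OF P(1) P(2)] by simp
qed

lemma exp_to_coeffs:
  fixes f :: "real \<Rightarrow> complex"
  assumes f: "continuous_on {0..1} f" and E: "has_expansion \<alpha> f"
  shows "expansion_coeffs f \<alpha>"
proof -
  have U: "uniform_limit {0..1} (Pc (of_real (\<alpha> 0)) (\<lambda>h. of_real (\<alpha> h))) f sequentially"
    using E unfolding has_expansion_def fp_Pc .
  note X = coeff_extract[OF f U]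
  show ?thesis unfolding expansion_coeffs_def
  proof (intro conjI allI impI)
    show "complex_of_real (\<alpha> 0) = f 1" using X(1) by simp
    fix h :: int assume h: "h \<noteq> 0"
    have "fourier_coeff f h = (of_real (\<alpha> h) - f 1) / (2 * \<i> * of_real pi * of_int h)"
      using X(2)[OF h] X(1) by simp
    then show "complex_of_real (\<alpha> h) = f 1 + 2 * \<i> * of_real pi * of_int h * fourier_coeff f h"
      using h by (simp add: field_simps)
  qed
qed

lemma F0_exists:
  fixes f :: "real \<Rightarrow> complex"
  assumes F: "f \<in> F0"
  shows "\<exists>\<alpha>. expansion_coeffs f \<alpha>"
proof -
  note P = F0_props[OF F]
  define c where "c h = (if h = 0 then f 1 else f 1 + 2 * \<i> * of_real pi * of_int h * fourier_coeff f h)" for h :: int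
  have "cnj (c h) = c h" for h
    using P(3) fc_imag[OF F, of h] by (simp add: c_def)
  then have R: "complex_of_real (Re (c h)) = c h" for h by (rule real_of_cnj)
  have "expansion_coeffs f (\<lambda>h. Re (c h))"
    unfolding expansion_coeffs_def R by (simp add: c_def)
  then show ?thesis by blast
qed

lemma S_char:
  fixes f :: "real \<Rightarrow> complex"
  assumes F: "f \<in> F0" and C: "expansion_coeffs f \<alpha>"
  shows "f \<in> S \<longleftrightarrow> (\<forall>h. \<bar>\<alpha> h\<bar> \<le> 2)"
proof -
  note P = F0_props[OF F]
  have a0: "f 1 = of_real (\<alpha> 0)" using C by (simp add: expansion_coeffs_def)
  have one: "f 1 \<in> complex_of_real ` {-2..2} \<longleftrightarrow> \<bar>\<alpha> 0\<bar> \<le> 2"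
  proof
    assume "f 1 \<in> complex_of_real ` {-2..2}"
    then obtain r where "r \<in> {-2..2}" "f 1 = of_real r" by auto
    then show "\<bar>\<alpha> 0\<bar> \<le> 2" using a0 by auto
  next
    assume "\<bar>\<alpha> 0\<bar> \<le> 2"
    then have "\<alpha> 0 \<in> {-2..2}" by auto
    then show "f 1 \<in> complex_of_real ` {-2..2}" unfolding a0 by (rule imageI)
  qed
  have gh: "fourier_coeff (\<lambda>t. f t - of_real t * f 1) h = - \<i> * of_real (\<alpha> h / (2 * pi * of_int h))"
    if h: "h \<noteq> 0" for h
  proof -
    have "fourier_coeff (\<lambda>t. f t - of_real t * f 1) h = fourier_coeff f h + f 1 / (2 * \<i> * of_real pi * of_int h)"
      by (rule fc_g[OF P(1) h])
    also have "... = of_real (\<alpha> h) / (2 * \<i> * of_real pi * of_int h)"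
      using C h unfolding expansion_coeffs_def by (simp add: field_simps)
    also have "... = - \<i> * of_real (\<alpha> h / (2 * pi * of_int h))"
      using h by (simp add: field_simps)
    finally show ?thesis .
  qed
  have cond: "(Re (fourier_coeff (\<lambda>t. f t - of_real t * f 1) h) = 0 \<and>
      norm (fourier_coeff (\<lambda>t. f t - of_real t * f 1) h) \<le> 1 / (pi * \<bar>of_int h\<bar>)) \<longleftrightarrow> \<bar>\<alpha> h\<bar> \<le> 2"
    if h: "h \<noteq> 0" for h
  proof -
    have hp: "\<bar>real_of_int h\<bar> > 0" using h by simp
    have "norm (fourier_coeff (\<lambda>t. f t - of_real t * f 1) h) = \<bar>\<alpha> h\<bar> / (2 * pi * \<bar>of_int h\<bar>)"
    proof -
      have nm: "norm (- \<i> * complex_of_real r) = \<bar>r\<bar>" for r by (simp add: norm_mult)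
      show ?thesis unfolding gh[OF h] nm abs_divide abs_mult by simp
    qed
    moreover have "\<bar>\<alpha> h\<bar> / (2 * pi * \<bar>of_int h\<bar>) \<le> 1 / (pi * \<bar>of_int h\<bar>) \<longleftrightarrow> \<bar>\<alpha> h\<bar> \<le> 2"
      using hp pi_gt_zero by (simp add: field_simps)
    ultimately show ?thesis unfolding gh[OF h] by simp
  qed
  have "f \<in> S \<longleftrightarrow> (\<bar>\<alpha> 0\<bar> \<le> 2 \<and> (\<forall>h::int. h \<noteq> 0 \<longrightarrow> \<bar>\<alpha> h\<bar> \<le> 2))"
    unfolding S_def Let_def using P(1) P(2) one cond by auto
  also have "... \<longleftrightarrow> (\<forall>h. \<bar>\<alpha> h\<bar> \<le> 2)" by metis
  finally show ?thesis .
qed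

theorem lemma3p1:
  fixes f :: "real \<Rightarrow> complex"
  assumes "continuous_on {0..1} f"
  shows "(f \<in> F0 \<longleftrightarrow> (\<exists>\<alpha>::int \<Rightarrow> real. has_expansion \<alpha> f))
    \<and> (f \<in> F0 \<longrightarrow> (\<forall>\<alpha>::int \<Rightarrow> real. has_expansion \<alpha> f \<longleftrightarrow> expansion_coeffs f \<alpha>))
    \<and> (f \<in> F0 \<longrightarrow> (\<forall>\<alpha>::int \<Rightarrow> real. expansion_coeffs f \<alpha> \<longrightarrow>
          (f \<in> S \<longleftrightarrow> (\<forall>h. \<bar>\<alpha> h\<bar> \<le> 2))))"
proof (intro conjI)
  show "f \<in> F0 \<longleftrightarrow> (\<exists>\<alpha>::int \<Rightarrow> real. has_expansion \<alpha> f)"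
    using F0_exists coeffs_to_exp exp_to_F0[OF assms] by blast
  show "f \<in> F0 \<longrightarrow> (\<forall>\<alpha>::int \<Rightarrow> real. has_expansion \<alpha> f \<longleftrightarrow> expansion_coeffs f \<alpha>)"
    using exp_to_coeffs[OF assms] coeffs_to_exp by blast
  show "f \<in> F0 \<longrightarrow> (\<forall>\<alpha>::int \<Rightarrow> real. expansion_coeffs f \<alpha> \<longrightarrow>
          (f \<in> S \<longleftrightarrow> (\<forall>h. \<bar>\<alpha> h\<bar> \<le> 2)))"
    using S_char by blast
qed

end
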